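(* Even for update sequences of width $3$: any deterministic strict dynamic embedding into HSTs incurs distortion $\Omega(2^n)$, and any probabilistic strict dynamic embedding into HSTs incurs distortion $\Omega(n)$, where $n$ is the number of points of the sequence. Furthermore, any deterministic online monotone embedding into HSTs incurs distortion $\Omega(n)$ on update sequences of width $3$.
   Context: For $\mu \ge 1$, a $\mu$-HST is a metric space whose points are the leaves of a rooted tree $T$; every node $v$ has weight $\varphi(v)\ge 0$, $\varphi(v)=0$ iff $v$ is a leaf, $\varphi(v)\le\varphi(u)/\mu$ when $v$ is a child of $u$; the distance of leaves $u,v$ is $\varphi(\mathrm{lca}(u,v))$. "HSTs" denotes the family of such metrics. An update sequence on a metric $(X,d_X)$ is a sequence of pairs $(v_t,o_t)\in X\times\{+,-\}$ ($v_t$ arrives if $o_t=+$, leaves if $o_t=-$) with alive sets $L_0=\varnothing$, $L_t=L_{t-1}\cup\{v_t\}$ or $L_{t-1}\setminus\{v_t\}$ accordingly; its width is $\max_t|L_t|$. A deterministic online monotone embedding into HSTs receives the sequence one element at a time and after $\sigma_t$ (depending only on $\sigma_1,\dots,\sigma_t$) outputs a metric $d_t$ on $L_t$ that is an HST, satisfies $d_t(u,v)\ge d_X(u,v)$ for $u,v\in L_t$, and $d_t(u,v)\le d_{t-1}(u,v)$ for $u,v\in L_{t-1}\cap L_t$. It is strict if moreover $d_t(u,v)=d_{t-1}(u,v)$ for all $u,v\in L_{t-1}\cap L_t$ (distances are fixed upon arrival). A probabilistic embedding is a distribution over deterministic ones (sequence chosen independently of the randomness). Distortion $\lambda$ means $d_t(u,v)\le\lambda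 d_X(u,v)$ (deterministic) resp. $\mathbb E[d_t(u,v)]\le\lambda d_X(u,v)$ (probabilistic) for all $t$ and $u,v\in L_t$. *)

theory Defs
  imports "HOL-Probability.Probability"
begin

definition metric_on :: "('a \<Rightarrow> 'a \<Rightarrow> real) \<Rightarrow> bool" where
  "metric_on d \<longleftrightarrow> (\<forall>x y z. (d x y = 0 \<longleftrightarrow> x = y) \<and> d x y = d y x \<and> d x z \<le> d x y + d y z)"

text \<open>A finite rooted tree: node set V (of naturals), root r, parent function p
  (with p r = r); every node reaches the root by iterating p.\<close>

definition anc :: "(nat \<Rightarrow> nat) \<Rightarrow> nat \<Rightarrow> nat set" where
  "anc p v = range (\<lambda>k. (p ^^ k) v)"

definition children :: "nat set \<Rightarrow> nat \<Rightarrow> (nat \<Rightarrow> nat) \<Rightarrow> nat \<Rightarrow> nat set" where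
  "children V r p u = {v \<in> V. v \<noteq> r \<and> p v = u}"

definition tree_leaves :: "nat set \<Rightarrow> nat \<Rightarrow> (nat \<Rightarrow> nat) \<Rightarrow> nat set" where
  "tree_leaves V r p = {v \<in> V. children V r p v = {}}"

definition rooted_tree :: "nat set \<Rightarrow> nat \<Rightarrow> (nat \<Rightarrow> nat) \<Rightarrow> bool" where
  "rooted_tree V r p \<longleftrightarrow> finite V \<and> r \<in> V \<and> p r = r \<and> (\<forall>v \<in> V - {r}. p v \<in> V)
     \<and> (\<forall>v \<in> V. r \<in> anc p v)"

definition lca :: "(nat \<Rightarrow> nat) \<Rightarrow> nat \<Rightarrow> nat \<Rightarrow> nat" where
  "lca p a b = (THE w. w \<in> anc p a \<inter> anc p b \<and> (\<forall>w' \<in> anc p a \<inter> anc p b. w' \<in> anc p w))"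

text \<open>d restricted to L is a mu-HST: L is identified (bijectively via f) with the
  leaves of a weighted rooted tree, and d is the weight of the lca.\<close>
definition is_muHST :: "real \<Rightarrow> 'a set \<Rightarrow> ('a \<Rightarrow> 'a \<Rightarrow> real) \<Rightarrow> bool" where
  "is_muHST \<mu> L d \<longleftrightarrow> (\<exists>V r p (\<phi>::nat \<Rightarrow> real) f.
      rooted_tree V r p
    \<and> (\<forall>v \<in> V. \<phi> v \<ge> 0)
    \<and> (\<forall>v \<in> V. \<phi> v = 0 \<longleftrightarrow> v \<in> tree_leaves V r p)
    \<and> (\<forall>v \<in> V - {r}. \<phi> v \<le> \<phi> (p v) / \<mu>)
    \<and> bij_betw f L (tree_leaves V r p)
    \<and> (\<forall>x \<in> L. \<forall>y \<in> L. d x y = \<phi> (lca p (f x) (f y))))"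

text \<open>The family "HSTs": mu-HSTs for some mu >= 1 (the empty metric space counts trivially).\<close>
definition is_HST :: "'a set \<Rightarrow> ('a \<Rightarrow> 'a \<Rightarrow> real) \<Rightarrow> bool" where
  "is_HST L d \<longleftrightarrow> L = {} \<or> (\<exists>\<mu> \<ge> 1. is_muHST \<mu> L d)"

text \<open>An update sequence is a list of pairs (v, o); o = True means arrival (+),
  o = False means departure (-).  alive (take t s) is the alive set L_t.\<close>

definition alive :: "('a \<times> bool) list \<Rightarrow> 'a set" where
  "alive s = foldl (\<lambda>L (v, op). if op then insert v L else L - {v}) {} s"

definition width :: "('a \<times> bool) list \<Rightarrow> nat" where
  "width s = Max ((\<lambda>t. card (alive (take t s))) ` {0..length s})"

definition points :: "('a \<times> bool) list \<Rightarrow> 'a set" where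
  "points s = fst ` set s"

text \<open>A deterministic online algorithm maps the prefix sigma_1..sigma_t to the metric d_t.\<close>
type_synonym 'a online_alg = "('a \<times> bool) list \<Rightarrow> 'a \<Rightarrow> 'a \<Rightarrow> real"

definition online_monotone_emb :: "('a \<Rightarrow> 'a \<Rightarrow> real) \<Rightarrow> 'a online_alg \<Rightarrow> bool" where
  "online_monotone_emb d A \<longleftrightarrow> (\<forall>s x.
     let L = alive (s @ [x]); L' = alive s in
       is_HST L (A (s @ [x]))
     \<and> (\<forall>u \<in> L. \<forall>v \<in> L. A (s @ [x]) u v \<ge> d u v)
     \<and> (\<forall>u \<in> L \<inter> L'. \<forall>v \<in> L \<inter> L'. A (s @ [x]) u v \<le> A s u v))"

definition strict_emb :: "('a \<Rightarrow> 'a \<Rightarrow> real) \<Rightarrow> 'a online_alg \<Rightarrow> bool" where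
  "strict_emb d A \<longleftrightarrow> online_monotone_emb d A \<and> (\<forall>s x.
     let L = alive (s @ [x]); L' = alive s in
       (\<forall>u \<in> L \<inter> L'. \<forall>v \<in> L \<inter> L'. A (s @ [x]) u v = A s u v))"

definition prob_strict_emb :: "('a \<Rightarrow> 'a \<Rightarrow> real) \<Rightarrow> 'a online_alg measure \<Rightarrow> bool" where
  "prob_strict_emb d M \<longleftrightarrow> prob_space M \<and> (\<forall>A \<in> space M. strict_emb d A)
     \<and> (\<forall>s u v. (\<lambda>A. A s u v) \<in> borel_measurable M)"

definition det_distortion ::
  "('a \<Rightarrow> 'a \<Rightarrow> real) \<Rightarrow> 'a online_alg \<Rightarrow> ('a \<times> bool) list \<Rightarrow> real \<Rightarrow> bool" where
  "det_distortion d A s lam \<longleftrightarrow> (\<forall>t \<le> length s. \<forall>u \<in> alive (take t s). \<forall>v \<in> alive (take t s).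
      A (take t s) u v \<le> lam * d u v)"

definition prob_distortion ::
  "('a \<Rightarrow> 'a \<Rightarrow> real) \<Rightarrow> 'a online_alg measure \<Rightarrow> ('a \<times> bool) list \<Rightarrow> real \<Rightarrow> bool" where
  "prob_distortion d M s lam \<longleftrightarrow> (\<forall>t \<le> length s. \<forall>u \<in> alive (take t s). \<forall>v \<in> alive (take t s).
      (\<integral>\<^sup>+ A. ennreal (A (take t s) u v) \<partial>M) \<le> ennreal (lam * d u v))"

end

theory Submission
  imports Defs
begin


lemma anc_self: "v \<in> anc p v"
  unfolding anc_def by (metis funpow_0 rangeI)

lemma anc_iff: "w \<in> anc p v \<longleftrightarrow> (\<exists>k. w = (p ^^ k) v)"
  unfolding anc_def by auto

lemma anc_trans: "w \<in> anc p v \<Longrightarrow> u \<in> anc p w \<Longrightarrow> u \<in> anc p v"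
  unfolding anc_iff by (metis comp_apply funpow_add)

lemma anc_chain: assumes "a \<in> anc p v" "b \<in> anc p v" shows "a \<in> anc p b \<or> b \<in> anc p a"
proof -
  obtain i j where i: "a = (p^^i) v" and j: "b = (p^^j) v" using assms unfolding anc_iff by blast
  show ?thesis
  proof (cases "i \<le> j")
    case True
    then have "b = (p^^(j-i)) a" using i j by (metis comp_apply funpow_add le_add_diff_inverse2)
    then show ?thesis unfolding anc_iff by blast
  next
    case False
    then have "a = (p^^(i-j)) b" using i j by (metis comp_apply funpow_add le_add_diff_inverse2 nat_le_linear)
    then show ?thesis unfolding anc_iff by blast
  qed
qed

lemma anc_in_V: assumes "rooted_tree V r p" "v \<in> V" shows "(p^^k) v \<in> V"
proof (induction k)
  case 0 then show ?case using assms by simp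
next
  case (Suc k)
  then show ?case using assms unfolding rooted_tree_def by (cases "(p^^k) v = r") auto
qed

lemma funpow_root: assumes "p r = r" shows "(p^^k) r = r"
  using assms by (induction k) auto

lemma funpow_period: assumes "(p^^P) v = v" shows "(p^^(q*P)) v = v"
proof (induction q)
  case 0 then show ?case by simp
next
  case (Suc q)
  have "(p^^(Suc q * P)) v = (p^^P) ((p^^(q*P)) v)" by (simp add: funpow_add)
  then show ?case using Suc assms by simp
qed

lemma anc_antisym: assumes "rooted_tree V r p" "v \<in> V" "w \<in> anc p v" "v \<in> anc p w"
  shows "v = w"
proof -
  obtain i where i: "w = (p^^i) v" using assms(3) unfolding anc_iff by blast
  obtain j where j: "v = (p^^j) w" using assms(4) unfolding anc_iff by blast
  have per: "(p^^(j+i)) v = v" using i j by (simp add: funpow_add)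
  show ?thesis
  proof (cases "j + i = 0")
    case True then show ?thesis using i by simp
  next
    case False
    have pr: "p r = r" and rv: "r \<in> anc p v" using assms(1,2) unfolding rooted_tree_def by auto
    obtain l where l: "r = (p^^l) v" using rv unfolding anc_iff by blast
    have ge: "l \<le> l * (j+i)" using False by (simp add: Suc_le_eq)
    have "v = (p^^(l*(j+i))) v" using funpow_period[OF per] by simp
    also have "\<dots> = (p^^(l*(j+i) - l)) ((p^^l) v)"
      using ge by (metis comp_apply funpow_add le_add_diff_inverse2)
    also have "\<dots> = r" using l funpow_root[of p r, OF pr] by simp
    finally have vr: "v = r" .
    then have "w = r" using i funpow_root[of p r, OF pr] by simp
    then show ?thesis using vr by simp
  qed
qed

lemma lca_prop: assumes "rooted_tree V r p" "a \<in> V" "b \<in> V"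
  shows "lca p a b \<in> anc p a \<inter> anc p b \<and> (\<forall>w'\<in>anc p a \<inter> anc p b. w' \<in> anc p (lca p a b))"
proof -
  let ?P = "\<lambda>w. w \<in> anc p a \<inter> anc p b \<and> (\<forall>w'\<in>anc p a \<inter> anc p b. w' \<in> anc p w)"
  have ra: "r \<in> anc p a" and rb: "r \<in> anc p b" using assms unfolding rooted_tree_def by auto
  obtain l where l: "(p^^l) a \<in> anc p b" using ra rb unfolding anc_iff by metis
  define k where "k = (LEAST k. (p^^k) a \<in> anc p b)"
  have k: "(p^^k) a \<in> anc p b" unfolding k_def using l by (rule LeastI)
  have Pw: "?P ((p^^k) a)"
  proof (intro conjI ballI)
    show "(p^^k) a \<in> anc p a \<inter> anc p b" using k anc_iff by blast
  next
    fix w' assume "w' \<in> anc p a \<inter> anc p b"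
    then obtain j where j: "w' = (p^^j) a" using anc_iff by blast
    have jb: "(p^^j) a \<in> anc p b" using j \<open>w' \<in> anc p a \<inter> anc p b\<close> by simp
    have "k \<le> j" unfolding k_def using jb by (rule Least_le)
    then have "w' = (p^^(j-k)) ((p^^k) a)" using j by (metis comp_apply funpow_add le_add_diff_inverse2)
    then show "w' \<in> anc p ((p^^k) a)" unfolding anc_iff by blast
  qed
  have uniq: "w = (p^^k) a" if "?P w" for w
  proof -
    have "w \<in> anc p ((p^^k) a)" using that Pw by blast
    moreover have "(p^^k) a \<in> anc p w" using that Pw by blast
    moreover have "(p^^k) a \<in> V" using anc_in_V[OF assms(1,2)] by blast
    ultimately show ?thesis using anc_antisym[OF assms(1)] by metis
  qed
  have "\<exists>!w. ?P w" using Pw uniq by blast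
  then have "?P (THE w. ?P w)" by (rule theI')
  then show ?thesis unfolding lca_def by simp
qed

lemma phi_mono:
  fixes \<phi> :: "nat \<Rightarrow> real"
  assumes "rooted_tree V r p" "\<forall>v\<in>V. \<phi> v \<ge> 0" "\<forall>v\<in>V - {r}. \<phi> v \<le> \<phi> (p v) / \<mu>" "\<mu> \<ge> 1" "v \<in> V"
  shows "\<phi> v \<le> \<phi> ((p^^k) v)"
proof (induction k)
  case 0 then show ?case by (simp del: funpow.simps)
next
  case (Suc k)
  let ?x = "(p^^k) v"
  have xV: "?x \<in> V" using anc_in_V[OF assms(1,5)] .
  have "\<phi> ?x \<le> \<phi> (p ?x)"
  proof (cases "?x = r")
    case True then show ?thesis using assms(1) unfolding rooted_tree_def by simp
  next
    case False
    then have pV: "p ?x \<in> V" using xV assms(1) unfolding rooted_tree_def by auto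
    then have nn: "\<phi> (p ?x) \<ge> 0" using assms(2) by auto
    have "\<phi> ?x \<le> \<phi> (p ?x) / \<mu>" using assms(3) xV False by auto
    also have "\<dots> \<le> \<phi> (p ?x)" using nn assms(4) by (simp add: divide_le_eq mult_le_cancel_left1)
    finally show ?thesis .
  qed
  then show ?case using Suc by simp
qed

lemma ultra:
  assumes "is_HST L D" "x \<in> L" "y \<in> L" "z \<in> L"
  shows "D x z \<le> max (D x y) (D y z)"
proof -
  have "L \<noteq> {}" using assms by auto
  then obtain \<mu> where mu: "\<mu> \<ge> 1" "is_muHST \<mu> L D" using assms(1) unfolding is_HST_def by blast
  then obtain V r p \<phi> f where T: "rooted_tree V r p" and ph0: "\<forall>v\<in>V. (\<phi>::nat\<Rightarrow>real) v \<ge> 0"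
    and phm: "\<forall>v\<in>V - {r}. \<phi> v \<le> \<phi> (p v) / \<mu>" and bij: "bij_betw f L (tree_leaves V r p)"
    and Dd: "\<forall>x\<in>L. \<forall>y\<in>L. D x y = \<phi> (lca p (f x) (f y))"
    unfolding is_muHST_def by blast
  have inV: "f u \<in> V" if "u \<in> L" for u
    using bij that unfolding bij_betw_def tree_leaves_def by auto
  let ?a = "f x" and ?b = "f y" and ?c = "f z"
  have a: "?a \<in> V" and b: "?b \<in> V" and c: "?c \<in> V" using inV assms by auto
  let ?w1 = "lca p ?a ?b" and ?w2 = "lca p ?b ?c" and ?w = "lca p ?a ?c"
  note L1 = lca_prop[OF T a b] and L2 = lca_prop[OF T b c] and L3 = lca_prop[OF T a c]
  have "?w \<in> anc p ?a" using L3 by blast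
  then obtain k0 where "?w = (p^^k0) ?a" using anc_iff by blast
  then have wV: "?w \<in> V" using anc_in_V[OF T a] by simp
  have mono: "\<phi> ?w \<le> \<phi> u" if "u \<in> anc p ?w" for u
    using that phi_mono[OF T ph0 phm mu(1) wV] unfolding anc_iff by blast
  have "?w1 \<in> anc p ?b" "?w2 \<in> anc p ?b" using L1 L2 by auto
  then consider "?w1 \<in> anc p ?w2" | "?w2 \<in> anc p ?w1" using anc_chain by blast
  then show ?thesis
  proof cases
    case 1
    have "?w1 \<in> anc p ?a \<inter> anc p ?c" using 1 L1 L2 anc_trans by blast
    then have "\<phi> ?w \<le> \<phi> ?w1" using L3 mono by blast
    then show ?thesis using Dd assms by simp
  next
    case 2
    have "?w2 \<in> anc p ?a \<inter> anc p ?c" using 2 L1 L2 anc_trans by blast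
    then have "\<phi> ?w \<le> \<phi> ?w2" using L3 mono by blast
    then show ?thesis using Dd assms by simp
  qed
qed



lemma ennreal_split:
  fixes a b :: ennreal assumes "a + b \<ge> ennreal (2*x)" "x \<ge> 0"
  shows "a \<ge> ennreal x \<or> b \<ge> ennreal x"
proof (rule ccontr)
  assume "\<not> ?thesis"
  then have la: "a < ennreal x" and lb: "b < ennreal x" by auto
  obtain a' where a': "a = ennreal a'" "a' \<ge> 0" using la by (cases a rule: ennreal_cases) auto
  obtain b' where b': "b = ennreal b'" "b' \<ge> 0" using lb by (cases b rule: ennreal_cases) auto
  have "a' < x" using la a' by (metis ennreal_leI not_le)
  moreover have "b' < x" using lb b' by (metis ennreal_leI not_le)
  ultimately have "ennreal (a' + b') < ennreal (2*x)" using a'(2) by (intro ennreal_lessI) auto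
  then have "a + b < ennreal (2*x)" using a' b' by (simp add: ennreal_plus)
  then show False using assms(1) by simp
qed

lemma alive_snoc: "alive (s @ [(v,b)]) = (if b then insert v (alive s) else alive s - {v})"
  unfolding alive_def by simp

lemma alive_Nil: "alive [] = {}" unfolding alive_def by simp

lemma points_append: "points (s @ r) = points s \<union> fst ` set r"
  unfolding points_def by auto

lemma alive_sub_points: "alive s \<subseteq> points s"
proof (induction s rule: rev_induct)
  case Nil then show ?case by (simp add: alive_Nil)
next
  case (snoc x xs)
  obtain v b where "x = (v,b)" by (cases x)
  then show ?case using snoc by (auto simp: alive_snoc points_append)
qed

definition pref3 :: "(nat \<times> bool) list \<Rightarrow> bool" where
  "pref3 s \<longleftrightarrow> (\<forall>t\<le>length s. card (alive (take t s)) \<le> 3)"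

definition has3 :: "(nat \<times> bool) list \<Rightarrow> bool" where
  "has3 s \<longleftrightarrow> (\<exists>t\<le>length s. card (alive (take t s)) = 3)"

lemma pref3_Nil: "pref3 []" unfolding pref3_def by (simp add: alive_Nil)

lemma pref3_snoc: "pref3 (s @ [x]) \<longleftrightarrow> pref3 s \<and> card (alive (s @ [x])) \<le> 3"
proof -
  have "(\<forall>t\<le>length (s@[x]). card (alive (take t (s@[x]))) \<le> 3) \<longleftrightarrow>
        (\<forall>t\<le>length s. card (alive (take t (s@[x]))) \<le> 3) \<and> card (alive (s @ [x])) \<le> 3"
    by (auto simp: le_Suc_eq)
  also have "(\<forall>t\<le>length s. card (alive (take t (s@[x]))) \<le> 3) \<longleftrightarrow> pref3 s"
    unfolding pref3_def by auto
  finally show ?thesis unfolding pref3_def by simp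
qed

lemma has3_append: "has3 s \<Longrightarrow> has3 (s @ r)"
  unfolding has3_def by (metis le_add1 length_append order_trans take_append take_eq_Nil2 append_Nil2 diff_is_0_eq)

lemma has3_here: "card (alive s) = 3 \<Longrightarrow> has3 s"
  unfolding has3_def by (rule exI[of _ "length s"]) simp

lemma width3: assumes "pref3 s" "has3 s" shows "width s = 3"
proof -
  let ?S = "(\<lambda>t. card (alive (take t s))) ` {0..length s}"
  have "finite ?S" by simp
  moreover have "3 \<in> ?S" using assms(2) unfolding has3_def by force
  moreover have "\<forall>y\<in>?S. y \<le> 3" using assms(1) unfolding pref3_def by auto
  ultimately have "Max ?S = 3" by (intro Max_eqI) auto
  then show ?thesis unfolding width_def .
qed

lemma card3: "card {a,b,c::'a} \<le> 3"
  by (auto simp: card_insert_if)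

lemma card2: "card {a,b::'a} \<le> 3"
  by (auto simp: card_insert_if)

lemma det_dist_at: "det_distortion d A (s @ r) lam \<Longrightarrow> u \<in> alive s \<Longrightarrow> v \<in> alive s \<Longrightarrow>
   A s u v \<le> lam * d u v"
  unfolding det_distortion_def by (drule spec[of _ "length s"]) auto

lemma prob_dist_at: "prob_distortion d M (s @ r) lam \<Longrightarrow> u \<in> alive s \<Longrightarrow> v \<in> alive s \<Longrightarrow>
   (\<integral>\<^sup>+ A. ennreal (A s u v) \<partial>M) \<le> ennreal (lam * d u v)"
  unfolding prob_distortion_def by (drule spec[of _ "length s"]) auto

lemma mono_facts:
  assumes "online_monotone_emb d A"
  shows "is_HST (alive (s@[x])) (A (s@[x]))"
    "u \<in> alive (s@[x]) \<Longrightarrow> v \<in> alive (s@[x]) \<Longrightarrow> d u v \<le> A (s@[x]) u v"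
    "u \<in> alive (s@[x]) \<Longrightarrow> v \<in> alive (s@[x]) \<Longrightarrow> u \<in> alive s \<Longrightarrow> v \<in> alive s \<Longrightarrow>
       A (s@[x]) u v \<le> A s u v"
  using assms unfolding online_monotone_emb_def Let_def by blast+

lemma strict_facts:
  assumes "strict_emb d A"
  shows "is_HST (alive (s@[x])) (A (s@[x]))"
    "u \<in> alive (s@[x]) \<Longrightarrow> v \<in> alive (s@[x]) \<Longrightarrow> d u v \<le> A (s@[x]) u v"
    "u \<in> alive (s@[x]) \<Longrightarrow> v \<in> alive (s@[x]) \<Longrightarrow> u \<in> alive s \<Longrightarrow> v \<in> alive s \<Longrightarrow>
       A (s@[x]) u v = A s u v"
  using assms unfolding strict_emb_def online_monotone_emb_def Let_def by blast+

definition dd :: "nat \<Rightarrow> nat \<Rightarrow> real" where "dd u v = \<bar>real u - real v\<bar>"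

lemma metric_dd: "metric_on dd"
  unfolding metric_on_def dd_def by auto



lemma dyadic:
  fixes m :: nat and Q :: "nat \<Rightarrow> (nat\<times>bool) list \<Rightarrow> nat \<Rightarrow> bool"
  assumes base: "Q 0 [(0,True),(2^m,True)] 0"
  and step: "\<And>k s lo. k < m \<Longrightarrow> Q k s lo \<Longrightarrow> alive s = {lo, lo + 2 * 2^(m - Suc k)} \<Longrightarrow>
      Q (Suc k) (s @ [(lo + 2^(m - Suc k), True), (lo + 2 * 2^(m - Suc k), False)]) lo \<or>
      Q (Suc k) (s @ [(lo + 2^(m - Suc k), True), (lo, False)]) (lo + 2^(m - Suc k))"
  shows "\<exists>s lo. Q m s lo \<and> alive s = {lo, lo+1} \<and> pref3 s \<and> (m \<ge> 1 \<longrightarrow> has3 s)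
           \<and> card (points s) = m + 2"
proof -
  have main: "k \<le> m \<Longrightarrow> \<exists>s lo. Q k s lo \<and> alive s = {lo, lo + 2^(m-k)} \<and> pref3 s \<and> (k \<ge> 1 \<longrightarrow> has3 s)
           \<and> finite (points s) \<and> card (points s) = k + 2 \<and> (\<forall>x\<in>points s. \<not> (lo < x \<and> x < lo + 2^(m-k)))" for k
  proof (induction k)
    case 0
    let ?s = "[(0::nat,True),(2^m,True)]"
    have al: "alive ?s = {0, 2^m}"
      unfolding alive_def by auto
    have pr: "pref3 ?s"
      unfolding pref3_def alive_def by (auto simp: le_Suc_eq numeral_2_eq_2 card_insert_if)
    have pts: "points ?s = {0, 2^m}" unfolding points_def by auto
    show ?case
      by (rule exI[of _ ?s], rule exI[of _ 0]) (use base al pr pts in auto)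
  next
    case (Suc k)
    then have km: "k < m" by simp
    obtain s lo where Qk: "Q k s lo" and al: "alive s = {lo, lo + 2^(m-k)}" and pr: "pref3 s"
      and h3: "k \<ge> 1 \<longrightarrow> has3 s" and fin: "finite (points s)" and cd: "card (points s) = k + 2"
      and gap: "\<forall>x\<in>points s. \<not> (lo < x \<and> x < lo + 2^(m-k))"
      using Suc by auto
    define h :: nat where "h = 2^(m - Suc k)"
    have h2: "2^(m-k) = 2 * h" unfolding h_def using km
      by (metis Suc_diff_Suc power_Suc)
    have hpos: "h \<ge> 1" unfolding h_def by simp
    let ?c = "lo + h" and ?hi = "lo + 2*h"
    let ?s1 = "s @ [(?c, True)]"
    have al': "alive s = {lo, ?hi}" using al h2 by simp
    have al1: "alive ?s1 = {?c, lo, ?hi}" by (simp add: al' alive_snoc)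
    have c3: "card (alive ?s1) = 3" using al1 hpos by (simp add: card_insert_if)
    have pr1: "pref3 ?s1" using pr pref3_snoc c3 by simp
    have "lo < ?c \<and> ?c < lo + 2^(m-k)" using h2 hpos by simp
    then have cnot: "?c \<notin> points s" using gap by blast
    have asp: "alive s \<subseteq> points s" by (rule alive_sub_points)
    have hiin: "?hi \<in> points s" "lo \<in> points s" using asp unfolding al' by auto
    have S: "Q (Suc k) (s @ [(?c, True), (?hi, False)]) lo \<or> Q (Suc k) (s @ [(?c, True), (lo, False)]) ?c"
      using step[OF km Qk] al' unfolding h_def by simp
    have hm: "2^(m - Suc k) = h" unfolding h_def ..
    show ?case
    proof (cases "Q (Suc k) (s @ [(?c, True), (?hi, False)]) lo")
      case True
      let ?s2 = "?s1 @ [(?hi, False)]"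
      have e: "?s2 = s @ [(?c, True), (?hi, False)]" by simp
      have al2: "alive ?s2 = {lo, lo + h}" using hpos by (auto simp: al1 alive_snoc[of ?s1 ?hi False] simp del: append_assoc)
      have pr2: "pref3 ?s2" using pr1 pref3_snoc[of ?s1 "(?hi,False)"] al2 card2 by metis
      have h32: "has3 ?s2" using has3_append has3_here c3 by blast
      have pts2: "points ?s2 = insert ?c (points s)" using hiin unfolding points_append by auto
      show ?thesis
      proof (rule exI[of _ ?s2], rule exI[of _ "lo"], intro conjI)
        show "Q (Suc k) ?s2 (lo)" using True e by simp
        show "alive ?s2 = {lo, lo + 2^(m - Suc k)}" using al2 hm by simp
        show "pref3 ?s2" by (rule pr2)
        show "Suc k \<ge> 1 \<longrightarrow> has3 ?s2" using h32 by simp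
        show "finite (points ?s2)" using pts2 fin by simp
        show "card (points ?s2) = Suc k + 2" using pts2 fin cd cnot by simp
        show "\<forall>x\<in>points ?s2. \<not> (lo < x \<and> x < lo + 2^(m - Suc k))"
          using pts2 gap h2 hm by auto
      qed
    next
      case False
      then have Q2: "Q (Suc k) (s @ [(?c, True), (lo, False)]) ?c" using S by blast
      let ?s2 = "?s1 @ [(lo, False)]"
      have e: "?s2 = s @ [(?c, True), (lo, False)]" by simp
      have al2: "alive ?s2 = {?c, ?c + h}" using hpos by (auto simp: al1 alive_snoc[of ?s1 lo False] simp del: append_assoc)
      have pr2: "pref3 ?s2" using pr1 pref3_snoc[of ?s1 "(lo,False)"] al2 card2 by metis
      have h32: "has3 ?s2" using has3_append has3_here c3 by blast
      have pts2: "points ?s2 = insert ?c (points s)" using hiin unfolding points_append by auto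
      show ?thesis
      proof (rule exI[of _ ?s2], rule exI[of _ "?c"], intro conjI)
        show "Q (Suc k) ?s2 (?c)" using Q2 e by simp
        show "alive ?s2 = {?c, ?c + 2^(m - Suc k)}" using al2 hm by simp
        show "pref3 ?s2" by (rule pr2)
        show "Suc k \<ge> 1 \<longrightarrow> has3 ?s2" using h32 by simp
        show "finite (points ?s2)" using pts2 fin by simp
        show "card (points ?s2) = Suc k + 2" using pts2 fin cd cnot by simp
        show "\<forall>x\<in>points ?s2. \<not> (?c < x \<and> x < ?c + 2^(m - Suc k))"
          using pts2 gap h2 hm by auto
      qed
    qed
  qed
  from main[of m] show ?thesis by auto
qed



lemma dd_simp: "dd a (a + h) = real h" "dd (a + h) a = real h" unfolding dd_def by auto

lemma part1:
  fixes m :: nat assumes m1: "m \<ge> 1" and A: "strict_emb dd A"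
  shows "\<exists>\<sigma>. width \<sigma> = 3 \<and> card (points \<sigma>) = m + 2 \<and>
           (\<forall>lam. det_distortion dd A \<sigma> lam \<longrightarrow> lam \<ge> 2 ^ m)"
proof -
  define Q where "Q = (\<lambda>k s lo. A s lo (lo + 2^(m-k)) \<ge> (2::real)^m)"
  have base: "Q 0 [(0,True),(2^m,True)] 0"
  proof -
    have "alive ([(0::nat,True)] @ [(2^m,True)]) = {0, 2^m}" unfolding alive_def by auto
    then have "dd 0 (2^m) \<le> A ([(0,True)] @ [(2^m,True)]) 0 (2^m)"
      using strict_facts(2)[OF A, of 0 "[(0,True)]" "(2^m,True)" "2^m"] by simp
    moreover have "dd 0 (2^m) = 2^m" unfolding dd_def by simp
    ultimately show ?thesis unfolding Q_def by simp
  qed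
  have step: "Q (Suc k) (s @ [(lo + 2^(m - Suc k), True), (lo + 2 * 2^(m - Suc k), False)]) lo \<or>
      Q (Suc k) (s @ [(lo + 2^(m - Suc k), True), (lo, False)]) (lo + 2^(m - Suc k))"
    if km: "k < m" and Qk: "Q k s lo" and al: "alive s = {lo, lo + 2 * 2^(m - Suc k)}" for k s lo
  proof -
    define h :: nat where "h = 2^(m - Suc k)"
    have h2: "2^(m-k) = 2 * h" unfolding h_def using km by (metis Suc_diff_Suc power_Suc)
    have hpos: "h \<ge> 1" unfolding h_def by simp
    let ?c = "lo + h" and ?hi = "lo + 2*h"
    let ?s1 = "s @ [(?c, True)]"
    have al': "alive s = {lo, ?hi}" using al unfolding h_def by simp
    have al1: "alive ?s1 = {?c, lo, ?hi}" by (simp add: al' alive_snoc)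
    have Z: "A ?s1 lo ?hi = A s lo ?hi"
      using strict_facts(3)[OF A, of lo s "(?c,True)" ?hi] al1 al' by simp
    have Zge: "A s lo ?hi \<ge> 2^m" using Qk h2 unfolding Q_def by simp
    have U: "A ?s1 lo ?hi \<le> max (A ?s1 lo ?c) (A ?s1 ?c ?hi)"
      using ultra[OF strict_facts(1)[OF A, of s "(?c,True)"]] al1 by simp
    have "A ?s1 lo ?c \<ge> 2^m \<or> A ?s1 ?c ?hi \<ge> 2^m" using Z Zge U by linarith
    then show ?thesis
    proof
      assume L: "A ?s1 lo ?c \<ge> 2^m"
      have al2: "alive (?s1 @ [(?hi,False)]) = {lo, ?c}"
        using hpos by (auto simp: al1 alive_snoc[of ?s1 ?hi False] simp del: append_assoc)
      have "A (?s1 @ [(?hi,False)]) lo ?c = A ?s1 lo ?c"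
        using strict_facts(3)[OF A, of lo ?s1 "(?hi,False)" ?c] al2 al1 by simp
      then have "Q (Suc k) (?s1 @ [(?hi,False)]) lo" using L unfolding Q_def h_def by simp
      then show ?thesis unfolding h_def by simp
    next
      assume R: "A ?s1 ?c ?hi \<ge> 2^m"
      have al2: "alive (?s1 @ [(lo,False)]) = {?c, ?hi}"
        using hpos by (auto simp: al1 alive_snoc[of ?s1 lo False] simp del: append_assoc)
      have E: "A (?s1 @ [(lo,False)]) ?c ?hi = A ?s1 ?c ?hi"
        using strict_facts(3)[OF A, of ?c ?s1 "(lo,False)" ?hi] al2 al1 by simp
      have eqc: "?c + h = ?hi" by simp
      have X: "2^m \<le> A (?s1 @ [(lo,False)]) ?c (?c + h)" unfolding eqc using E R by simp
      have "Q (Suc k) (?s1 @ [(lo,False)]) ?c" unfolding Q_def h_def[symmetric] using X by simp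
      then show ?thesis unfolding h_def by simp
    qed
  qed
  obtain s lo where Qm: "Q m s lo" and al: "alive s = {lo, lo+1}" and pr: "pref3 s"
    and h3: "has3 s" and cd: "card (points s) = m + 2"
    using dyadic[of Q m, OF base step] m1 by blast
  show ?thesis
  proof (rule exI[of _ s], intro conjI allI impI)
    show "width s = 3" using width3 pr h3 by blast
    show "card (points s) = m + 2" by (rule cd)
    fix lam assume "det_distortion dd A s lam"
    then have "A s lo (lo+1) \<le> lam * dd lo (lo+1)"
      using det_dist_at[of dd A s "[]" lam lo "lo+1"] al by simp
    then show "lam \<ge> 2^m" using Qm unfolding Q_def using dd_simp(1)[of lo 1] by simp
  qed
qed



lemma part2:
  fixes m :: nat assumes m1: "m \<ge> 1" and PM: "prob_strict_emb dd M"
  shows "\<exists>\<sigma>. width \<sigma> = 3 \<and> card (points \<sigma>) = m + 2 \<and>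
           (\<forall>lam. prob_distortion dd M \<sigma> lam \<longrightarrow> lam \<ge> 1 + real m / 2)"
proof -
  have PS: "prob_space M" and SA: "\<And>A. A \<in> space M \<Longrightarrow> strict_emb dd A"
    and meas: "\<And>s u v. (\<lambda>A. A s u v) \<in> borel_measurable M"
    using PM unfolding prob_strict_emb_def by auto
  have measE: "(\<lambda>A. ennreal (A s u v)) \<in> borel_measurable M" for s u v
    using measurable_compose[OF meas measurable_ennreal] .
  have const: "(\<integral>\<^sup>+ A. ennreal c \<partial>M) = ennreal c" for c
    by (simp add: PS prob_space.emeasure_space_1)
  define I where "I = (\<lambda>s u v. \<integral>\<^sup>+ A. ennreal (A s u v) \<partial>M)"
  define Q where "Q = (\<lambda>k s lo. I s lo (lo + 2^(m-k)) \<ge> ennreal ((1 + real k / 2) * 2^(m-k)))"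
  have base: "Q 0 [(0,True),(2^m,True)] 0"
  proof -
    have al: "alive ([(0::nat,True)] @ [(2^m,True)]) = {0, 2^m}" unfolding alive_def by auto
    have "ennreal (2^m) \<le> ennreal (A [(0,True),(2^m,True)] 0 (2^m))" if "A \<in> space M" for A
    proof -
      have "dd 0 (2^m) \<le> A ([(0,True)] @ [(2^m,True)]) 0 (2^m)"
        using strict_facts(2)[OF SA[OF that], of 0 "[(0,True)]" "(2^m,True)" "2^m"] al by simp
      moreover have "dd 0 (2^m) = 2^m" unfolding dd_def by simp
      ultimately show ?thesis by (intro ennreal_leI) simp
    qed
    then have "(\<integral>\<^sup>+ A. ennreal (2^m) \<partial>M) \<le> I [(0,True),(2^m,True)] 0 (2^m)"
      unfolding I_def by (intro nn_integral_mono) auto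
    then show ?thesis unfolding Q_def const by simp
  qed
  have step: "Q (Suc k) (s @ [(lo + 2^(m - Suc k), True), (lo + 2 * 2^(m - Suc k), False)]) lo \<or>
      Q (Suc k) (s @ [(lo + 2^(m - Suc k), True), (lo, False)]) (lo + 2^(m - Suc k))"
    if km: "k < m" and Qk: "Q k s lo" and al: "alive s = {lo, lo + 2 * 2^(m - Suc k)}" for k s lo
  proof -
    define h :: nat where "h = 2^(m - Suc k)"
    have h2: "2^(m-k) = 2 * h" unfolding h_def using km by (metis Suc_diff_Suc power_Suc)
    have h2r: "(2::real)^(m-k) = 2 * real h" using h2 by (metis of_nat_mult of_nat_numeral of_nat_power)
    have hr: "(2::real)^(m - Suc k) = real h" unfolding h_def by simp
    have hpos: "h \<ge> 1" unfolding h_def by simp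
    let ?c = "lo + h" and ?hi = "lo + 2*h"
    let ?s1 = "s @ [(?c, True)]"
    have al': "alive s = {lo, ?hi}" using al unfolding h_def by simp
    have al1: "alive ?s1 = {?c, lo, ?hi}" by (simp add: al' alive_snoc)
    have pw: "ennreal (A s lo ?hi) + ennreal h \<le> ennreal (A ?s1 lo ?c) + ennreal (A ?s1 ?c ?hi)"
      if AM: "A \<in> space M" for A
    proof -
      note SAA = SA[OF AM]
      have Z: "A ?s1 lo ?hi = A s lo ?hi"
        using strict_facts(3)[OF SAA, of lo s "(?c,True)" ?hi] al1 al' by simp
      have Z0: "A ?s1 lo ?hi \<ge> dd lo ?hi"
        using strict_facts(2)[OF SAA, of lo s "(?c,True)" ?hi] al1 by simp
      have X: "A ?s1 lo ?c \<ge> h"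
        using strict_facts(2)[OF SAA, of lo s "(?c,True)" ?c] al1 dd_simp(1)[of lo h] by simp
      have Y: "A ?s1 ?c ?hi \<ge> h"
        using strict_facts(2)[OF SAA, of ?c s "(?c,True)" ?hi] al1 by (simp add: dd_def)
      have U: "A ?s1 lo ?hi \<le> max (A ?s1 lo ?c) (A ?s1 ?c ?hi)"
        using ultra[OF strict_facts(1)[OF SAA, of s "(?c,True)"]] al1 by simp
      have dd0: "dd lo ?hi \<ge> 0" unfolding dd_def by simp
      have "A s lo ?hi + h \<le> A ?s1 lo ?c + A ?s1 ?c ?hi" using Z X Y U by linarith
      then have "ennreal (A s lo ?hi + h) \<le> ennreal (A ?s1 lo ?c + A ?s1 ?c ?hi)"
        by (rule ennreal_leI)
      moreover have "A s lo ?hi \<ge> 0" using Z Z0 dd0 by linarith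
      ultimately show ?thesis using X Y hpos
        by (simp add: ennreal_plus[symmetric] del: ennreal_plus)
    qed
    have "I s lo ?hi + ennreal h = (\<integral>\<^sup>+ A. ennreal (A s lo ?hi) + ennreal h \<partial>M)"
      unfolding I_def by (subst nn_integral_add) (auto simp: measE const prob_space.emeasure_space_1[OF PS])
    also have "\<dots> \<le> (\<integral>\<^sup>+ A. ennreal (A ?s1 lo ?c) + ennreal (A ?s1 ?c ?hi) \<partial>M)"
      by (intro nn_integral_mono pw)
    also have "\<dots> = I ?s1 lo ?c + I ?s1 ?c ?hi"
      unfolding I_def by (subst nn_integral_add) (auto simp: measE)
    finally have sum: "I s lo ?hi + ennreal h \<le> I ?s1 lo ?c + I ?s1 ?c ?hi" .
    define B where "B = (1 + real k / 2) * (2 * real h)"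
    define B' where "B' = (1 + real (Suc k) / 2) * real h"
    have IB: "I s lo ?hi \<ge> ennreal B" using Qk unfolding Q_def B_def using h2 h2r by simp
    have B0: "B \<ge> 0" "B' \<ge> 0" unfolding B_def B'_def by auto
    have "ennreal (2 * B') = ennreal B + ennreal h"
      using B0 by (simp add: ennreal_plus[symmetric] B_def B'_def algebra_simps del: ennreal_plus)
    also have "\<dots> \<le> I s lo ?hi + ennreal h" using IB by (simp add: add_right_mono)
    finally have "ennreal (2 * B') \<le> I ?s1 lo ?c + I ?s1 ?c ?hi" using sum by simp
    then have split: "I ?s1 lo ?c \<ge> ennreal B' \<or> I ?s1 ?c ?hi \<ge> ennreal B'"
      using ennreal_split B0 by blast
    then show ?thesis
    proof
      assume L: "I ?s1 lo ?c \<ge> ennreal B'"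
      have al2: "alive (?s1 @ [(?hi,False)]) = {lo, ?c}"
        using hpos by (auto simp: al1 alive_snoc[of ?s1 ?hi False] simp del: append_assoc)
      have "I (?s1 @ [(?hi,False)]) lo ?c = I ?s1 lo ?c"
        unfolding I_def
      proof (intro nn_integral_cong)
        fix A assume "A \<in> space M"
        then show "ennreal (A (?s1 @ [(?hi,False)]) lo ?c) = ennreal (A ?s1 lo ?c)"
          using strict_facts(3)[OF SA, of A lo ?s1 "(?hi,False)" ?c] al2 al1 by simp
      qed
      then have "Q (Suc k) (?s1 @ [(?hi,False)]) lo" using L unfolding Q_def B'_def h_def[symmetric] hr
        by simp
      then show ?thesis unfolding h_def by simp
    next
      assume R: "I ?s1 ?c ?hi \<ge> ennreal B'"
      have al2: "alive (?s1 @ [(lo,False)]) = {?c, ?hi}"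
        using hpos by (auto simp: al1 alive_snoc[of ?s1 lo False] simp del: append_assoc)
      have E: "I (?s1 @ [(lo,False)]) ?c ?hi = I ?s1 ?c ?hi"
        unfolding I_def
      proof (intro nn_integral_cong)
        fix A assume "A \<in> space M"
        then show "ennreal (A (?s1 @ [(lo,False)]) ?c ?hi) = ennreal (A ?s1 ?c ?hi)"
          using strict_facts(3)[OF SA, of A ?c ?s1 "(lo,False)" ?hi] al2 al1 by simp
      qed
      have eqc: "?c + h = ?hi" by simp
      have X: "ennreal B' \<le> I (?s1 @ [(lo,False)]) ?c (?c + h)" unfolding eqc using E R by simp
      have "Q (Suc k) (?s1 @ [(lo,False)]) ?c" unfolding Q_def h_def[symmetric] hr using X
        unfolding B'_def by simp
      then show ?thesis unfolding h_def by simp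
    qed
  qed
  obtain s lo where Qm: "Q m s lo" and al: "alive s = {lo, lo+1}" and pr: "pref3 s"
    and h3: "has3 s" and cd: "card (points s) = m + 2"
    using dyadic[of Q m, OF base step] m1 by blast
  show ?thesis
  proof (rule exI[of _ s], intro conjI allI impI)
    show "width s = 3" using width3 pr h3 by blast
    show "card (points s) = m + 2" by (rule cd)
    fix lam assume "prob_distortion dd M s lam"
    then have "I s lo (lo+1) \<le> ennreal (lam * dd lo (lo+1))"
      using prob_dist_at[of dd M s "[]" lam lo "lo+1"] al unfolding I_def by simp
    then have le: "ennreal (1 + real m / 2) \<le> ennreal lam"
      using Qm unfolding Q_def using dd_simp(1)[of lo 1] by simp
    show "lam \<ge> 1 + real m / 2"
    proof (rule ccontr)
      assume "\<not> ?thesis"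
      then have "ennreal lam < ennreal (1 + real m / 2)" by (intro ennreal_lessI) auto
      then show False using le by simp
    qed
  qed
qed



fun pre3 :: "nat \<Rightarrow> (nat \<times> bool) list" where
  "pre3 0 = [(0,True)]"
| "pre3 (Suc k) = (pre3 k @ (if 2 \<le> k then [(k-1,False)] else [])) @ [(Suc k,True)]"

lemma alive_mid: "alive (s @ (if 2 \<le> k then [(k-1,False)] else [])) =
   (if 2 \<le> k then alive s - {k-1} else alive s)"
  using alive_snoc[of s "k-1" False] by simp

lemma alive_pre_Suc: "alive (pre3 (Suc k)) = insert (Suc k) (if 2 \<le> k then alive (pre3 k) - {k-1} else alive (pre3 k))"
proof -
  have "alive (pre3 (Suc k)) = insert (Suc k) (alive (pre3 k @ (if 2 \<le> k then [(k-1,False)] else [])))"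
    unfolding pre3.simps(2) alive_snoc[of "pre3 k @ (if 2 \<le> k then [(k-1,False)] else [])"] by simp
  then show ?thesis unfolding alive_mid .
qed

lemma al_pre: "k \<ge> 1 \<Longrightarrow> alive (pre3 k) = {0, k-1, k}"
proof (induction k)
  case 0 then show ?case by simp
next
  case (Suc k)
  show ?case
  proof (cases "k = 0")
    case True
    have "alive (pre3 0) = {0}" unfolding pre3.simps(1) alive_def by simp
    then show ?thesis unfolding alive_pre_Suc using True by auto
  next
    case False
    then have IH: "alive (pre3 k) = {0, k-1, k}" using Suc by simp
    show ?thesis
    proof (cases "2 \<le> k")
      case True
      then have "alive (pre3 (Suc k)) = insert (Suc k) ({0, k-1, k} - {k-1})"
        unfolding alive_pre_Suc IH by simp
      also have "\<dots> = {0, Suc k - 1, Suc k}" using True by auto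
      finally show ?thesis .
    next
      case F: False
      then have k1: "k = 1" using False by simp
      have "alive (pre3 (Suc k)) = insert (Suc k) {0, k-1, k}"
        unfolding alive_pre_Suc IH using F by simp
      then show ?thesis using k1 by auto
    qed
  qed
qed

lemma points_pre_Suc: "points (pre3 (Suc k)) = points (pre3 k) \<union> (if 2 \<le> k then {k-1} else {}) \<union> {Suc k}"
  unfolding pre3.simps(2) points_append by auto

lemma pts_pre: "points (pre3 k) = {0..k}"
proof (induction k)
  case 0 then show ?case unfolding points_def by auto
next
  case (Suc k)
  have "points (pre3 (Suc k)) = {0..k} \<union> (if 2 \<le> k then {k-1} else {}) \<union> {Suc k}"
    unfolding points_pre_Suc Suc ..
  also have "\<dots> = {0..Suc k}" by auto
  finally show ?case .
qed

lemma pref3_pre: "pref3 (pre3 k)"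
proof (induction k)
  case 0
  have "pref3 ([] @ [(0::nat,True)])" unfolding pref3_snoc
    using pref3_Nil by (simp add: alive_def)
  then show ?case by simp
next
  case (Suc k)
  let ?s = "pre3 k @ (if 2 \<le> k then [(k-1,False)] else [])"
  have m: "pref3 ?s"
  proof (cases "2 \<le> k")
    case True
    have al: "alive (pre3 k @ [(k-1,False)]) = {0, k-1, k} - {k-1}"
      using al_pre[of k] True alive_snoc[of "pre3 k" "k-1" False] by simp
    have "card ({0, k-1, k} - {k-1}) \<le> card {0, k-1, k}" by (rule card_Diff1_le)
    also have "\<dots> \<le> 3" by (rule card3)
    finally have "card (alive (pre3 k @ [(k-1,False)])) \<le> 3" unfolding al .
    then have "pref3 (pre3 k @ [(k-1,False)])" unfolding pref3_snoc using Suc by simp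
    then show ?thesis using True by simp
  next
    case False then show ?thesis using Suc by simp
  qed
  have c: "card (alive (?s @ [(Suc k, True)])) \<le> 3"
    using al_pre[of "Suc k"] card3[of 0 "Suc k - 1" "Suc k"] unfolding pre3.simps(2) by simp
  have "pref3 (?s @ [(Suc k, True)])" unfolding pref3_snoc using m c by simp
  then show ?case unfolding pre3.simps(2) .
qed

lemma pre_prefix: "k \<le> N \<Longrightarrow> \<exists>r. pre3 N = pre3 k @ r"
proof (induction N)
  case 0 then show ?case by simp
next
  case (Suc N)
  show ?case
  proof (cases "k = Suc N")
    case True then show ?thesis by simp
  next
    case False
    then have "k \<le> N" using Suc.prems by simp
    then obtain r where r: "pre3 N = pre3 k @ r" using Suc.IH by blast
    have "pre3 (Suc N) = pre3 k @ (r @ (if 2 \<le> N then [(N-1,False)] else []) @ [(Suc N,True)])"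
      unfolding pre3.simps(2) r by simp
    then show ?thesis by blast
  qed
qed

lemma has3_pre: "N \<ge> 2 \<Longrightarrow> has3 (pre3 N)"
proof -
  assume "N \<ge> 2"
  then obtain r where r: "pre3 N = pre3 2 @ r" using pre_prefix by blast
  have "alive (pre3 2) = {0,1,2}" using al_pre[of 2] by simp
  then have "card (alive (pre3 2)) = 3" by simp
  then have "has3 (pre3 2)" by (rule has3_here)
  then have "has3 (pre3 2 @ r)" by (rule has3_append)
  then show ?thesis unfolding r .
qed

lemma part3:
  fixes N :: nat assumes N2: "N \<ge> 2" and A: "online_monotone_emb dd A"
  shows "\<exists>\<sigma>. width \<sigma> = 3 \<and> card (points \<sigma>) = N + 1 \<and>
           (\<forall>lam. det_distortion dd A \<sigma> lam \<longrightarrow> lam \<ge> real N)"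
proof (rule exI[of _ "pre3 N"], intro conjI allI impI)
  show "width (pre3 N) = 3" using width3 pref3_pre has3_pre N2 by blast
  show "card (points (pre3 N)) = N + 1" unfolding pts_pre by simp
  fix lam assume D: "det_distortion dd A (pre3 N) lam"
  have DA: "A (pre3 k) u v \<le> lam * dd u v" if kN: "k \<le> N" and uv: "u \<in> alive (pre3 k)" "v \<in> alive (pre3 k)" for k u v
  proof -
    obtain r where r: "pre3 N = pre3 k @ r" using pre_prefix[OF kN] by blast
    have "det_distortion dd A (pre3 k @ r) lam" using D unfolding r .
    then show ?thesis by (rule det_dist_at[OF _ uv])
  qed
  have claim: "1 \<le> k \<Longrightarrow> k \<le> N \<Longrightarrow> A (pre3 k) 0 k \<ge> N \<Longrightarrow> lam \<ge> N" for k
  proof (induction k)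
    case 0 then show ?case by simp
  next
    case (Suc k)
    show ?case
    proof (cases "k = 0")
      case True
      have "A (pre3 1) 0 1 \<le> lam * dd 0 1" using DA[of 1 0 1] Suc.prems al_pre[of 1] True by simp
      then show ?thesis using Suc.prems True unfolding dd_def by simp
    next
      case False
      define s' where "s' = pre3 k @ (if 2 \<le> k then [(k-1,False)] else [])"
      have e: "pre3 (Suc k) = s' @ [(Suc k, True)]" unfolding s'_def by simp
      have alS: "alive (pre3 (Suc k)) = {0, k, Suc k}" using al_pre[of "Suc k"] by simp
      have alk: "alive (pre3 k) = {0, k-1, k}" using al_pre[of k] False by simp
      have als': "0 \<in> alive s'" "k \<in> alive s'"
        unfolding s'_def alive_mid using alk False by auto
      have U: "A (pre3 (Suc k)) 0 (Suc k) \<le> max (A (pre3 (Suc k)) 0 k) (A (pre3 (Suc k)) k (Suc k))"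
        using ultra[OF mono_facts(1)[OF A, of s' "(Suc k, True)"]] alS unfolding e by simp
      show ?thesis
      proof (cases "A (pre3 (Suc k)) k (Suc k) \<ge> N")
        case True
        have "A (pre3 (Suc k)) k (Suc k) \<le> lam * dd k (Suc k)" using DA[of "Suc k" k "Suc k"] Suc.prems alS by simp
        then show ?thesis using True unfolding dd_def by simp
      next
        case F: False
        then have G: "A (pre3 (Suc k)) 0 k \<ge> N" using U Suc.prems by linarith
        have M1: "A (pre3 (Suc k)) 0 k \<le> A s' 0 k"
          using mono_facts(3)[OF A, of 0 s' "(Suc k, True)" k] alS als' unfolding e by simp
        have M2: "A s' 0 k \<le> A (pre3 k) 0 k"
        proof (cases "2 \<le> k")
          case True
          then have "s' = pre3 k @ [(k-1,False)]" unfolding s'_def by simp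
          then show ?thesis using mono_facts(3)[OF A, of 0 "pre3 k" "(k-1,False)" k] als' alk by simp
        next
          case False then show ?thesis unfolding s'_def by simp
        qed
        have "A (pre3 k) 0 k \<ge> N" using G M1 M2 by linarith
        then show ?thesis using Suc.IH Suc.prems \<open>k \<noteq> 0\<close> by simp
      qed
    qed
  qed
  obtain k' where k': "N = Suc k'" using N2 by (cases N) auto
  define s' where "s' = pre3 k' @ (if 2 \<le> k' then [(k'-1,False)] else [])"
  have e: "pre3 N = s' @ [(N, True)]" unfolding s'_def k' by simp
  have alN: "alive (pre3 N) = {0, N-1, N}" using al_pre[of N] N2 by simp
  have "dd 0 N \<le> A (pre3 N) 0 N"
    using mono_facts(2)[OF A, of 0 s' "(N,True)" N] alN unfolding e by simp
  then have "A (pre3 N) 0 N \<ge> N" unfolding dd_def by simp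
  then show "lam \<ge> real N" using claim[of N] N2 by simp
qed


theorem mainTheorem3:
  shows "(\<exists>c > 0. \<exists>n0. \<forall>n \<ge> n0. \<exists>d :: nat \<Rightarrow> nat \<Rightarrow> real. metric_on d \<and>
            (\<forall>A. strict_emb d A \<longrightarrow>
               (\<exists>\<sigma>. width \<sigma> = 3 \<and> card (points \<sigma>) = n \<and>
                   (\<forall>lam. det_distortion d A \<sigma> lam \<longrightarrow> lam \<ge> c * 2 ^ n))))
       \<and> (\<exists>c > 0. \<exists>n0. \<forall>n \<ge> n0. \<exists>d :: nat \<Rightarrow> nat \<Rightarrow> real. metric_on d \<and>
            (\<forall>M. prob_strict_emb d M \<longrightarrow>
               (\<exists>\<sigma>. width \<sigma> = 3 \<and> card (points \<sigma>) = n \<and>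
                   (\<forall>lam. prob_distortion d M \<sigma> lam \<longrightarrow> lam \<ge> c * real n))))
       \<and> (\<exists>c > 0. \<exists>n0. \<forall>n \<ge> n0. \<exists>d :: nat \<Rightarrow> nat \<Rightarrow> real. metric_on d \<and>
            (\<forall>A. online_monotone_emb d A \<longrightarrow>
               (\<exists>\<sigma>. width \<sigma> = 3 \<and> card (points \<sigma>) = n \<and>
                   (\<forall>lam. det_distortion d A \<sigma> lam \<longrightarrow> lam \<ge> c * real n))))"
proof (intro conjI)
  show "\<exists>c > 0. \<exists>n0. \<forall>n \<ge> n0. \<exists>d :: nat \<Rightarrow> nat \<Rightarrow> real. metric_on d \<and>
            (\<forall>A. strict_emb d A \<longrightarrow>
               (\<exists>\<sigma>. width \<sigma> = 3 \<and> card (points \<sigma>) = n \<and>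
                   (\<forall>lam. det_distortion d A \<sigma> lam \<longrightarrow> lam \<ge> c * 2 ^ n)))"
  proof (intro exI[of _ "1/4::real"] conjI exI[of _ "3::nat"] allI impI)
    fix n :: nat assume n3: "3 \<le> n"
    show "\<exists>d :: nat \<Rightarrow> nat \<Rightarrow> real. metric_on d \<and>
            (\<forall>A. strict_emb d A \<longrightarrow>
               (\<exists>\<sigma>. width \<sigma> = 3 \<and> card (points \<sigma>) = n \<and>
                   (\<forall>lam. det_distortion d A \<sigma> lam \<longrightarrow> lam \<ge> 1/4 * 2 ^ n)))"
    proof (intro exI[of _ dd] conjI allI impI)
      show "metric_on dd" by (rule metric_dd)
      fix A assume A: "strict_emb dd A"
      have m1: "n - 2 \<ge> 1" and nm: "n - 2 + 2 = n" using n3 by auto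
      have p: "(2::real)^n = 4 * 2^(n-2)" using nm by (metis power_add mult.commute power2_eq_square num_double numeral_times_numeral)
      obtain \<sigma> where w: "width \<sigma> = 3" and c: "card (points \<sigma>) = n - 2 + 2"
        and l: "\<forall>lam. det_distortion dd A \<sigma> lam \<longrightarrow> lam \<ge> 2 ^ (n-2)"
        using part1[OF m1 A] by blast
      show "\<exists>\<sigma>. width \<sigma> = 3 \<and> card (points \<sigma>) = n \<and>
                   (\<forall>lam. det_distortion dd A \<sigma> lam \<longrightarrow> lam \<ge> 1/4 * 2 ^ n)"
        using w c l nm p by (intro exI[of _ \<sigma>]) auto
    qed
  qed simp
next
  show "\<exists>c > 0. \<exists>n0. \<forall>n \<ge> n0. \<exists>d :: nat \<Rightarrow> nat \<Rightarrow> real. metric_on d \<and>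
            (\<forall>M. prob_strict_emb d M \<longrightarrow>
               (\<exists>\<sigma>. width \<sigma> = 3 \<and> card (points \<sigma>) = n \<and>
                   (\<forall>lam. prob_distortion d M \<sigma> lam \<longrightarrow> lam \<ge> c * real n)))"
  proof (intro exI[of _ "1/2::real"] conjI exI[of _ "3::nat"] allI impI)
    fix n :: nat assume n3: "3 \<le> n"
    show "\<exists>d :: nat \<Rightarrow> nat \<Rightarrow> real. metric_on d \<and>
            (\<forall>M. prob_strict_emb d M \<longrightarrow>
               (\<exists>\<sigma>. width \<sigma> = 3 \<and> card (points \<sigma>) = n \<and>
                   (\<forall>lam. prob_distortion d M \<sigma> lam \<longrightarrow> lam \<ge> 1/2 * real n)))"
    proof (intro exI[of _ dd] conjI allI impI)
      show "metric_on dd" by (rule metric_dd)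
      fix M assume M: "prob_strict_emb dd M"
      have m1: "n - 2 \<ge> 1" and nm: "n - 2 + 2 = n" using n3 by auto
      have p: "1 + real (n-2) / 2 = 1/2 * real n" using n3 by (simp add: of_nat_diff field_simps)
      obtain \<sigma> where w: "width \<sigma> = 3" and c: "card (points \<sigma>) = n - 2 + 2"
        and l: "\<forall>lam. prob_distortion dd M \<sigma> lam \<longrightarrow> lam \<ge> 1 + real (n-2) / 2"
        using part2[OF m1 M] by blast
      show "\<exists>\<sigma>. width \<sigma> = 3 \<and> card (points \<sigma>) = n \<and>
                   (\<forall>lam. prob_distortion dd M \<sigma> lam \<longrightarrow> lam \<ge> 1/2 * real n)"
      proof (intro exI[of _ \<sigma>] conjI allI impI)
        show "width \<sigma> = 3" by (rule w)
        show "card (points \<sigma>) = n" using c nm by simp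
        fix lam assume "prob_distortion dd M \<sigma> lam"
        then have "lam \<ge> 1 + real (n-2) / 2" using l by blast
        then show "lam \<ge> 1/2 * real n" using p by linarith
      qed
    qed
  qed simp
next
  show "\<exists>c > 0. \<exists>n0. \<forall>n \<ge> n0. \<exists>d :: nat \<Rightarrow> nat \<Rightarrow> real. metric_on d \<and>
            (\<forall>A. online_monotone_emb d A \<longrightarrow>
               (\<exists>\<sigma>. width \<sigma> = 3 \<and> card (points \<sigma>) = n \<and>
                   (\<forall>lam. det_distortion d A \<sigma> lam \<longrightarrow> lam \<ge> c * real n)))"
  proof (intro exI[of _ "1/2::real"] conjI exI[of _ "3::nat"] allI impI)
    fix n :: nat assume n3: "3 \<le> n"
    show "\<exists>d :: nat \<Rightarrow> nat \<Rightarrow> real. metric_on d \<and>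
            (\<forall>A. online_monotone_emb d A \<longrightarrow>
               (\<exists>\<sigma>. width \<sigma> = 3 \<and> card (points \<sigma>) = n \<and>
                   (\<forall>lam. det_distortion d A \<sigma> lam \<longrightarrow> lam \<ge> 1/2 * real n)))"
    proof (intro exI[of _ dd] conjI allI impI)
      show "metric_on dd" by (rule metric_dd)
      fix A assume A: "online_monotone_emb dd A"
      have N2: "n - 1 \<ge> 2" and nm: "n - 1 + 1 = n" using n3 by auto
      have p: "real (n-1) \<ge> 1/2 * real n" using n3 by (simp add: of_nat_diff field_simps)
      obtain \<sigma> where w: "width \<sigma> = 3" and c: "card (points \<sigma>) = n - 1 + 1"
        and l: "\<forall>lam. det_distortion dd A \<sigma> lam \<longrightarrow> lam \<ge> real (n-1)"
        using part3[OF N2 A] by blast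
      show "\<exists>\<sigma>. width \<sigma> = 3 \<and> card (points \<sigma>) = n \<and>
                   (\<forall>lam. det_distortion dd A \<sigma> lam \<longrightarrow> lam \<ge> 1/2 * real n)"
      proof (intro exI[of _ \<sigma>] conjI allI impI)
        show "width \<sigma> = 3" by (rule w)
        show "card (points \<sigma>) = n" using c nm by simp
        fix lam assume "det_distortion dd A \<sigma> lam"
        then have "lam \<ge> real (n-1)" using l by blast
        then show "lam \<ge> 1/2 * real n" using p by linarith
      qed
    qed
  qed simp
qed

end
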